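(* Let $\mathcal{A}=\langle Q,A,E,I,T\rangle$ be a finite automaton over the free monoid $A^*$ and let $\omega$ and $\omega'$ be two total orders on $Q$. Then $$\mathbf{N}\wedge\mathbf{S}\wedge\mathbf{P}\ \vdash\ \mathsf{M}_\omega(\mathcal{A})\equiv\mathsf{M}_{\omega'}(\mathcal{A}),$$ that is, the two expressions produced by the McNaughton–Yamada algorithm for the orders $\omega$ and $\omega'$ can be proved equal using the natural identities $\mathbf{N}$ together with the aperiodic identities $\mathbf{S}$ and $\mathbf{P}$.
   Context: Rational expressions over $A^*$ are the well-formed formulas built from the constants $\mathsf{0}$ and $\mathsf{1}$ and the letters of $A$ by the binary operators $+$ and $\cdot$ and the unary operator ${}^*$. All expressions are taken reduced modulo the trivial identities $\mathsf{E}+\mathsf{0}\equiv\mathsf{E}$, $\mathsf{0}+\mathsf{E}\equiv\mathsf{E}$, $\mathsf{E}\cdot\mathsf{0}\equiv\mathsf{0}$, $\mathsf{0}\cdot\mathsf{E}\equiv\mathsf{0}$, $\mathsf{E}\cdot\mathsf{1}\equiv\mathsf{E}$, $\mathsf{1}\cdot\mathsf{E}\equiv\mathsf{E}$, $\mathsf{0}^*\equiv\mathsf{1}$, and all computations below are performed modulo them. The natural identities $\mathbf{N}$ are associativity of $+$ and of $\cdot$, distributivity of $\cdot$ over $+$ on both sides, and commutativity $\mathsf{E}+\mathsf{F}\equiv\mathsf{F}+\mathsf{E}$. The aperiodic identities are: - $\mathbf{S}$: $(\mathsf{E}+\mathsf{F})^*\equiv\mathsf{E}^*\cdot(\mathsf{F}\cdot\mathsf{E}^*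 )^*$ and $(\mathsf{E}+\mathsf{F})^*\equiv(\mathsf{E}^*\cdot\mathsf{F})^*\cdot\mathsf{E}^*$; - $\mathbf{P}$: $(\mathsf{E}\cdot\mathsf{F})^*\equiv\mathsf{1}+\mathsf{E}\cdot(\mathsf{F}\cdot\mathsf{E})^*\cdot\mathsf{F}$. For a set $\mathcal{I}$ of identities, $\mathcal{I}\vdash\mathsf{X}\equiv\mathsf{Y}$ means that $\mathsf{X}$ and $\mathsf{Y}$ are related by the smallest congruence on expressions (for $+$, $\cdot$ and ${}^*$) that contains all instances of the identities in $\mathcal{I}$, working modulo the trivial identities. McNaughton–Yamada algorithm for the order $\omega$. Identify $Q$ with $\{1,\dots,n\}$ via $\omega$. For $p,q\in Q$, let $\mathsf{E}_{p,q}$ be the sum, written in some fixed order and bracketing, of the letters labelling the transitions from $p$ to $q$; it is $\mathsf{0}$ if there is none. Define: - $\mathsf{M}^{(0)}_{p,q}=\mathsf{E}_{p,q}$; - for $1\le k\le n$, $\mathsf{M}^{(k)}_{p,q}=\mathsf{M}^{(k-1)}_{p,q}+\mathsf{M}^{(k-1)}_{p,k}\cdot(\mathsf{M}^{(k-1)}_{k,k})^*\cdot\mathsf{M}^{(k-1)}_{k,q}$; - $\mathsf{M}_{p,q}=\mathsf{M}^{(n)}_{p,q}$ if $p\neq q$, and $\mathsf{M}_{p,p}=\mathsf{M}^{(n)}_{p,p}+\mathsf{1}$. Then $\mathsf{M}_\omega(\mathcal{A})=\sum_{p\in I,\,q\in T}\mathsf{M}_{p,q}$, the sum being written in some fixed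 order and bracketing. It denotes the language accepted by $\mathcal{A}$. *)

theory Defs
  imports Main
begin

datatype 'a rexp =
    Zero
  | One
  | Atom 'a
  | Plus "'a rexp" "'a rexp"
  | Times "'a rexp" "'a rexp"
  | Star "'a rexp"

text \<open>Derivability  N \<and> S \<and> P \<turnstile> X \<equiv> Y : the smallest congruence (for +, \<cdot>, *)
  containing all instances of N, S, P, working modulo the trivial identities
  (which are therefore included as generators of the congruence).\<close>

inductive NSP_eq :: "'a rexp \<Rightarrow> 'a rexp \<Rightarrow> bool" where
  refl: "NSP_eq e e"
| sym: "NSP_eq e f \<Longrightarrow> NSP_eq f e"
| trans: "NSP_eq e f \<Longrightarrow> NSP_eq f g \<Longrightarrow> NSP_eq e g"
| cong_plus: "NSP_eq e e' \<Longrightarrow> NSP_eq f f' \<Longrightarrow> NSP_eq (Plus e f) (Plus e' f')"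
| cong_times: "NSP_eq e e' \<Longrightarrow> NSP_eq f f' \<Longrightarrow> NSP_eq (Times e f) (Times e' f')"
| cong_star: "NSP_eq e e' \<Longrightarrow> NSP_eq (Star e) (Star e')"
| triv_plus_zero_r: "NSP_eq (Plus e Zero) e"
| triv_plus_zero_l: "NSP_eq (Plus Zero e) e"
| triv_times_zero_r: "NSP_eq (Times e Zero) Zero"
| triv_times_zero_l: "NSP_eq (Times Zero e) Zero"
| triv_times_one_r: "NSP_eq (Times e One) e"
| triv_times_one_l: "NSP_eq (Times One e) e"
| triv_star_zero: "NSP_eq (Star Zero) One"
| N_plus_assoc: "NSP_eq (Plus (Plus e f) g) (Plus e (Plus f g))"
| N_times_assoc: "NSP_eq (Times (Times e f) g) (Times e (Times f g))"
| N_distrib_l: "NSP_eq (Times e (Plus f g)) (Plus (Times e f) (Times e g))"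
| N_distrib_r: "NSP_eq (Times (Plus e f) g) (Plus (Times e g) (Times f g))"
| N_plus_comm: "NSP_eq (Plus e f) (Plus f e)"
| S1: "NSP_eq (Star (Plus e f)) (Times (Star e) (Star (Times f (Star e))))"
| S2: "NSP_eq (Star (Plus e f)) (Times (Star (Times (Star e) f)) (Star e))"
| P: "NSP_eq (Star (Times e f)) (Plus One (Times (Times e (Star (Times f e))) f))"

fun sum_rexp :: "'a rexp list \<Rightarrow> 'a rexp" where
  "sum_rexp [] = Zero"
| "sum_rexp [e] = e"
| "sum_rexp (e # es) = Plus e (sum_rexp es)"

text \<open>For a total order w on the finite set Q, the k-th state (0-based; i.e. the state
  numbered k+1 under the identification of Q with {1..n}) is the state having exactly
  k strict predecessors.\<close>

definition ord_nth :: "'q set \<Rightarrow> ('q \<times> 'q) set \<Rightarrow> nat \<Rightarrow> 'q" where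
  "ord_nth Q w k = (THE q. q \<in> Q \<and> card {p \<in> Q. (p, q) \<in> w \<and> p \<noteq> q} = k)"

text \<open>lbl p q : a list enumerating (without repetition) the letters labelling the
  transitions from p to q, i.e. the chosen order in which E_{p,q} is written.\<close>

definition letter_list_ok :: "('q \<times> 'a \<times> 'q) set \<Rightarrow> ('q \<Rightarrow> 'q \<Rightarrow> 'a list) \<Rightarrow> bool" where
  "letter_list_ok E lbl \<longleftrightarrow>
     (\<forall>p q. distinct (lbl p q) \<and> set (lbl p q) = {a. (p, a, q) \<in> E})"

definition Emat :: "('q \<Rightarrow> 'q \<Rightarrow> 'a list) \<Rightarrow> 'q \<Rightarrow> 'q \<Rightarrow> 'a rexp" where
  "Emat lbl p q = sum_rexp (map Atom (lbl p q))"

fun MY_step :: "'q set \<Rightarrow> ('q \<times> 'q) set \<Rightarrow> ('q \<Rightarrow> 'q \<Rightarrow> 'a list) \<Rightarrow> nat \<Rightarrow> 'q \<Rightarrow> 'q \<Rightarrow> 'a rexp" where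
  "MY_step Q w lbl 0 p q = Emat lbl p q"
| "MY_step Q w lbl (Suc k) p q =
     (let s = ord_nth Q w k in
      Plus (MY_step Q w lbl k p q)
           (Times (Times (MY_step Q w lbl k p s) (Star (MY_step Q w lbl k s s)))
                  (MY_step Q w lbl k s q)))"

definition MY_entry :: "'q set \<Rightarrow> ('q \<times> 'q) set \<Rightarrow> ('q \<Rightarrow> 'q \<Rightarrow> 'a list) \<Rightarrow> 'q \<Rightarrow> 'q \<Rightarrow> 'a rexp" where
  "MY_entry Q w lbl p q =
     (if p = q then Plus (MY_step Q w lbl (card Q) p p) One
      else MY_step Q w lbl (card Q) p q)"

definition MY_expr :: "'q set \<Rightarrow> ('q \<times> 'q) set \<Rightarrow> ('q \<Rightarrow> 'q \<Rightarrow> 'a list) \<Rightarrow> ('q \<times> 'q) list \<Rightarrow> 'a rexp" where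
  "MY_expr Q w lbl ps = sum_rexp (map (\<lambda>(p, q). MY_entry Q w lbl p q) ps)"

definition pair_list_ok :: "'q set \<Rightarrow> 'q set \<Rightarrow> ('q \<times> 'q) list \<Rightarrow> bool" where
  "pair_list_ok I T ps \<longleftrightarrow> distinct ps \<and> set ps = I \<times> T"

definition finite_automaton :: "'q set \<Rightarrow> 'a set \<Rightarrow> ('q \<times> 'a \<times> 'q) set \<Rightarrow> 'q set \<Rightarrow> 'q set \<Rightarrow> bool" where
  "finite_automaton Q A E I T \<longleftrightarrow> finite Q \<and> finite A \<and> E \<subseteq> Q \<times> A \<times> Q \<and> I \<subseteq> Q \<and> T \<subseteq> Q"

end

theory Submission
  imports Defs "HOL-Library.Multiset"
begin

lemma NSP_equivp: "equivp NSP_eq"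
  by (rule equivpI; auto intro: reflpI sympI transpI NSP_eq.intros)

quotient_type 'a req = "'a rexp" / NSP_eq
  morphisms rep_req abs_req
  by (rule NSP_equivp)

instantiation req :: (type) semiring_0
begin
lift_definition zero_req :: "'a req" is Zero .
lift_definition plus_req :: "'a req \<Rightarrow> 'a req \<Rightarrow> 'a req" is Plus
  by (rule NSP_eq.cong_plus)
lift_definition times_req :: "'a req \<Rightarrow> 'a req \<Rightarrow> 'a req" is Times
  by (rule NSP_eq.cong_times)
instance
  by standard (transfer, fact NSP_eq.intros)+
end

instantiation req :: (type) monoid_mult
begin
lift_definition one_req :: "'a req" is One .
instance
  by standard (transfer, fact NSP_eq.intros)+

end

lift_definition star :: "'a req \<Rightarrow> 'a req" is Star by (rule NSP_eq.cong_star)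

lemma star_S1: "star (x + y) = star x * star (y * star x)"
  by transfer (rule NSP_eq.S1)
lemma star_S2: "star (x + y) = star (star x * y) * star x"
  by transfer (rule NSP_eq.S2)
lemma star_P: "star (x * y) = 1 + x * star (y * x) * y"
  by transfer (rule NSP_eq.P)

lemma unfold_r: "star x = 1 + star x * x"
  using star_P[of 1 x] by simp

lemma slide: "star (x * y) * x = x * star (y * x)"
proof -
  have "star (x * y) * x = (1 + x * star (y * x) * y) * x"
    by (simp only: star_P[of x y])
  also have "\<dots> = x + x * (star (y * x) * (y * x))"
    by (simp add: algebra_simps)
  also have "\<dots> = x * star (y * x)"
    by (subst (2) unfold_r) (simp add: algebra_simps)
  finally show ?thesis .
qed

lemma idA: "star (a + b * star d * c) = star a + star a * b * star (d + c * star a * b) * c * star a"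
proof -
  have X: "star (star d * c * star a * b) * star d = star (d + c * star a * b)"
    using star_S2[of d "c * star a * b"] by (simp add: mult.assoc)
  have "star (a + b * star d * c) = star a * star (b * (star d * c * star a))"
    using star_S1[of a "b * star d * c"] by (simp add: mult.assoc)
  also have "\<dots> = star a * (1 + b * star (star d * c * star a * b) * (star d * c * star a))"
    by (subst star_P[of b "star d * c * star a"]) (simp only: mult.assoc)
  also have "\<dots> = star a * (1 + b * (star (star d * c * star a * b) * star d) * c * star a)"
    by (simp only: mult.assoc)
  also have "\<dots> = star a * (1 + b * star (d + c * star a * b) * c * star a)"
    by (simp only: X)
  also have "\<dots> = star a + star a * b * star (d + c * star a * b) * c * star a"
    by (simp add: algebra_simps)
  finally show ?thesis .
qed

lemma idC: "star a * b * star (d + c * star a * b) = star (a + b * star d * c) * b * star d"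
proof -
  have "star (a + b * star d * c) * b * star d = star a * (star (b * (star d * c * star a)) * b) * star d"
    using star_S1[of a "b * star d * c"] by (simp add: mult.assoc)
  also have "\<dots> = star a * b * (star (star d * (c * star a * b)) * star d)"
    by (subst slide[of b "star d * c * star a"]) (simp only: mult.assoc)
  also have "\<dots> = star a * b * star (d + c * star a * b)"
    by (simp only: star_S2[of d "c * star a * b"])
  finally show ?thesis by simp
qed

definition elimq :: "('q \<Rightarrow> 'q \<Rightarrow> 'a req) \<Rightarrow> 'q \<Rightarrow> 'q \<Rightarrow> 'q \<Rightarrow> 'a req" where
  "elimq M s p q = M p q + M p s * star (M s s) * M s q"

lemma swap_core:
  fixes a b c d X Y pq ps sq pt tq :: "'a req"
  assumes A: "Y = star a + star a * b * X * c * star a"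
    and B: "X = star d + star d * c * Y * b * star d"
    and C: "star a * b * X = Y * b * star d"
    and D: "star d * c * Y = X * c * star a"
  shows "pq + ps * star a * sq + (pt + ps * star a * b) * X * (tq + c * star a * sq)
       = pq + pt * star d * tq + (ps + pt * star d * c) * Y * (sq + b * star d * tq)"
proof -
  have "pq + pt * star d * tq + (ps + pt * star d * c) * Y * (sq + b * star d * tq)
     = pq + pt * (star d + star d * c * Y * b * star d) * tq + ps * Y * sq
       + ps * (Y * b * star d) * tq + pt * (star d * c * Y) * sq"
    by (simp add: algebra_simps)
  also have "\<dots> = pq + pt * X * tq + ps * Y * sq
       + ps * (Y * b * star d) * tq + pt * (star d * c * Y) * sq"
    by (simp only: B[symmetric])
  also have "\<dots> = pq + pt * X * tq + ps * Y * sq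
       + ps * (star a * b * X) * tq + pt * (X * c * star a) * sq"
    by (simp only: C[symmetric] D)
  also have "\<dots> = pq + ps * star a * sq + (pt + ps * star a * b) * X * (tq + c * star a * sq)"
    unfolding A by (simp add: algebra_simps)
  finally show ?thesis by simp
qed

lemma elim_swap: "elimq (elimq M s) t = elimq (elimq M t) s"
proof (intro ext)
  fix p q
  define a where "a = M s s"
  define b where "b = M s t"
  define c where "c = M t s"
  define d where "d = M t t"
  have A: "star (a + b * star d * c) = star a + star a * b * star (d + c * star a * b) * c * star a"
    by (rule idA)
  have B: "star (d + c * star a * b) = star d + star d * c * star (a + b * star d * c) * b * star d"
    using idA[of d c a b] by simp
  have C: "star a * b * star (d + c * star a * b) = star (a + b * star d * c) * b * star d"
    by (rule idC)
  have D: "star d * c * star (a + b * star d * c) = star (d + c * star a * b) * c * star a"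
    using idC[of d c a b] by simp
  note core = swap_core[OF A B C D, of "M p q" "M p s" "M s q" "M p t" "M t q"]
  show "elimq (elimq M s) t p q = elimq (elimq M t) s p q"
  proof (cases "s = t")
    case True thus ?thesis by simp
  next
    case False
    thus ?thesis using core unfolding elimq_def a_def b_def c_def d_def by simp
  qed
qed


fun elims :: "('q \<Rightarrow> 'q \<Rightarrow> 'a req) \<Rightarrow> 'q list \<Rightarrow> 'q \<Rightarrow> 'q \<Rightarrow> 'a req" where
  "elims M [] = M"
| "elims M (s # ss) = elims (elimq M s) ss"

lemma elims_append: "elims M (xs @ [x]) = elimq (elims M xs) x"
  by (induction xs arbitrary: M) auto

lemma elims_move: "elims M (ys1 @ x # ys2) = elims M (x # ys1 @ ys2)"
proof (induction ys1 arbitrary: M)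
  case Nil thus ?case by simp
next
  case (Cons y ys)
  have "elims M ((y # ys) @ x # ys2) = elims (elimq M y) (x # ys @ ys2)"
    using Cons by simp
  also have "\<dots> = elims (elimq (elimq M x) y) (ys @ ys2)"
    by (simp add: elim_swap)
  finally show ?case by simp
qed

lemma elims_perm: "mset xs = mset ys \<Longrightarrow> elims M xs = elims M ys"
proof (induction xs arbitrary: M ys)
  case Nil thus ?case by simp
next
  case (Cons x xs)
  have "x \<in> set ys" using Cons.prems by (metis list.set_intros(1) set_mset_mset)
  then obtain ys1 ys2 where ys: "ys = ys1 @ x # ys2" by (meson split_list)
  have "mset xs = mset (ys1 @ ys2)" using Cons.prems ys by simp
  hence "elims (elimq M x) xs = elims (elimq M x) (ys1 @ ys2)" by (rule Cons.IH)
  thus ?case using ys elims_move[of M ys1 x ys2] by simp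
qed

lemma abs_plus[simp]: "abs_req (Plus x y) = abs_req x + abs_req y"
  by (simp add: plus_req.abs_eq)
lemma abs_times[simp]: "abs_req (Times x y) = abs_req x * abs_req y"
  by (simp add: times_req.abs_eq)
lemma abs_star[simp]: "abs_req (Star x) = star (abs_req x)"
  by (simp add: star.abs_eq)
lemma abs_zero[simp]: "abs_req Zero = 0"
  by (simp add: zero_req.abs_eq)
lemma abs_one[simp]: "abs_req One = 1"
  by (simp add: one_req.abs_eq)

lemma abs_sum: "abs_req (sum_rexp xs) = sum_list (map abs_req xs)"
  by (induction xs rule: sum_rexp.induct) auto

lemma MY_step_abs:
  "abs_req (MY_step Q w lbl k p q) =
   elims (\<lambda>p q. abs_req (Emat lbl p q)) (map (ord_nth Q w) [0..<k]) p q"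
proof (induction k arbitrary: p q)
  case 0 thus ?case by simp
next
  case (Suc k)
  show ?case by (simp add: Let_def Suc.IH elims_append elimq_def)
qed

lemma Emat_abs:
  assumes "letter_list_ok E lbl" "letter_list_ok E lbl'"
  shows "abs_req (Emat lbl p q) = abs_req (Emat lbl' p q)"
proof -
  have "mset (lbl p q) = mset (lbl' p q)"
    using assms unfolding letter_list_ok_def by (metis set_eq_iff_mset_eq_distinct)
  hence "mset (map (abs_req \<circ> Atom) (lbl p q)) = mset (map (abs_req \<circ> Atom) (lbl' p q))"
    by (metis mset_map)
  hence "sum_list (map (abs_req \<circ> Atom) (lbl p q)) = sum_list (map (abs_req \<circ> Atom) (lbl' p q))"
    by (metis sum_mset_sum_list)
  thus ?thesis unfolding Emat_def abs_sum by simp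
qed

lemma ord_nth_mset:
  assumes fin: "finite Q" and lin: "linear_order_on Q w"
  shows "mset (map (ord_nth Q w) [0..<card Q]) = mset_set Q"
proof -
  define g where "g q = card {p \<in> Q. (p, q) \<in> w \<and> p \<noteq> q}" for q
  have sub: "w \<subseteq> Q \<times> Q" and tr: "trans w" and an: "antisym w" and tot: "total_on Q w"
    using lin unfolding linear_order_on_def partial_order_on_def preorder_on_def refl_on_def
    by auto
  have lt: "g p < g q" if "p \<in> Q" "q \<in> Q" "(p, q) \<in> w" "p \<noteq> q" for p q
  proof -
    have "{x \<in> Q. (x, p) \<in> w \<and> x \<noteq> p} \<subset> {x \<in> Q. (x, q) \<in> w \<and> x \<noteq> q}"
    proof
      show "{x \<in> Q. (x, p) \<in> w \<and> x \<noteq> p} \<subseteq> {x \<in> Q. (x, q) \<in> w \<and> x \<noteq> q}"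
        using that tr an unfolding trans_def antisym_def by blast
      show "{x \<in> Q. (x, p) \<in> w \<and> x \<noteq> p} \<noteq> {x \<in> Q. (x, q) \<in> w \<and> x \<noteq> q}"
        using that by blast
    qed
    thus ?thesis unfolding g_def by (simp add: fin psubset_card_mono)
  qed
  have inj: "inj_on g Q"
  proof (rule inj_onI)
    fix p q assume "p \<in> Q" "q \<in> Q" "g p = g q"
    thus "p = q" using lt tot unfolding total_on_def by (metis less_irrefl)
  qed
  have rng: "g ` Q \<subseteq> {0..<card Q}"
  proof
    fix k assume "k \<in> g ` Q"
    then obtain q where q: "q \<in> Q" "k = g q" by blast
    have "{p \<in> Q. (p, q) \<in> w \<and> p \<noteq> q} \<subset> Q" using q by blast
    hence "g q < card Q" unfolding g_def by (simp add: fin psubset_card_mono)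
    thus "k \<in> {0..<card Q}" using q by simp
  qed
  have "card (g ` Q) = card {0..<card Q}" using inj by (simp add: card_image)
  hence img: "g ` Q = {0..<card Q}" using rng by (simp add: card_subset_eq)
  have bij: "bij_betw g Q {0..<card Q}" using inj img by (simp add: bij_betw_def)
  have on: "ord_nth Q w = the_inv_into Q g"
    unfolding ord_nth_def the_inv_into_def g_def by (rule ext) simp
  have bij2: "bij_betw (ord_nth Q w) {0..<card Q} Q"
    unfolding on by (rule bij_betw_the_inv_into[OF bij])
  have d: "distinct (map (ord_nth Q w) [0..<card Q])"
    using bij2 by (simp add: distinct_map bij_betw_def)
  have st: "set (map (ord_nth Q w) [0..<card Q]) = Q"
    using bij2 by (simp add: bij_betw_def)
  show ?thesis using mset_set_set[OF d] st by simp
qed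


theorem corollary3p10:
  fixes Q :: "'q set" and A :: "'a set" and E :: "('q \<times> 'a \<times> 'q) set"
    and I T :: "'q set" and w w' :: "('q \<times> 'q) set"
    and lbl lbl' :: "'q \<Rightarrow> 'q \<Rightarrow> 'a list" and ps ps' :: "('q \<times> 'q) list"
  assumes "finite_automaton Q A E I T"
    and "linear_order_on Q w" and "linear_order_on Q w'"
    and "letter_list_ok E lbl" and "letter_list_ok E lbl'"
    and "pair_list_ok I T ps" and "pair_list_ok I T ps'"
  shows "NSP_eq (MY_expr Q w lbl ps) (MY_expr Q w' lbl' ps')"
proof -
  have fin: "finite Q" using assms(1) unfolding finite_automaton_def by simp
  have om: "mset (map (ord_nth Q w) [0..<card Q]) = mset (map (ord_nth Q w') [0..<card Q])"
    using ord_nth_mset[OF fin assms(2)] ord_nth_mset[OF fin assms(3)] by simp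
  have M0: "(\<lambda>p q. abs_req (Emat lbl p q)) = (\<lambda>p q. abs_req (Emat lbl' p q))"
    using Emat_abs[OF assms(4) assms(5)] by blast
  have st: "abs_req (MY_step Q w lbl (card Q) p q) = abs_req (MY_step Q w' lbl' (card Q) p q)" for p q
    unfolding MY_step_abs M0 using elims_perm[OF om] by metis
  have en: "abs_req (MY_entry Q w lbl p q) = abs_req (MY_entry Q w' lbl' p q)" for p q
    unfolding MY_entry_def using st by simp
  define F where "F x = abs_req (MY_entry Q w lbl (fst x) (snd x))" for x
  have e1: "abs_req (MY_expr Q w lbl ps) = sum_list (map F ps)"
    unfolding MY_expr_def abs_sum F_def by (simp add: case_prod_beta comp_def)
  have e2: "abs_req (MY_expr Q w' lbl' ps') = sum_list (map F ps')"
    unfolding MY_expr_def abs_sum F_def en by (simp add: case_prod_beta comp_def)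
  have "mset ps = mset ps'"
    using assms(6,7) unfolding pair_list_ok_def by (metis set_eq_iff_mset_eq_distinct)
  hence "sum_list (map F ps) = sum_list (map F ps')"
    by (metis mset_map sum_mset_sum_list)
  hence "abs_req (MY_expr Q w lbl ps) = abs_req (MY_expr Q w' lbl' ps')"
    using e1 e2 by simp
  thus ?thesis by (simp add: req.abs_eq_iff)
qed

end
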